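(* Let $G$ be a group. The following are equivalent: (1) every transitive function $u:\rho\to G$ is trivial; (2) every transitive function $w:\le\;\to G$ on the partial order $\le$ of $\mathcal C$ is trivial; (3) for every function $v:\Gamma_1\to G$ such that $v(a_1)\cdots v(a_r)=v(b_1)\cdots v(b_s)$ for all paths $a_1\cdots a_r$ and $b_1\cdots b_s$ in $\Gamma$ with the same start vertex and the same end vertex, there exists $f:\Gamma_0\to G$ with $v(a)=f(s(a))f(t(a))^{-1}$ for every $a\in\Gamma_1$.
   Context: $\rho$ is a preorder on $\{1,\dots,n\}$; $i\sim j$ iff $i\rho j$ and $j\rho i$; $\mathcal C$ is the set of classes, $\hat i$ the class of $i$, with partial order $\hat i\le\hat j$ iff $i\rho j$. For a preorder (or partial order) $\pi$ on a set $X$, a transitive function on $\pi$ with values in a group $G$ is a map $u:\pi\to G$ (defined on pairs $(x,y)$ with $x\pi y$) such that $u(x,y)u(y,z)=u(x,z)$ whenever $x\pi y$, $y\pi z$; it is trivial if there are $g_x\in G$ ($x\in X$) with $u(x,y)=g_xg_y^{-1}$ for all $x\pi y$. $\Gamma=(\Gamma_0,\Gamma_1)$ is the directed graph with vertex set $\Gamma_0=\mathcal C$ and an arrow $a$ from $\alpha$ to $\beta$ (written $s(a)=\alpha$, $t(a)=\beta$) iff $\alpha<\beta$ and there is no $\gamma$ with $\alpha<\gamma<\beta$ (the Hasse diagram). A path $a_1\cdots a_r$ means arrows with $t(a_i)=s(a_{i+1})$. *)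

theory Defs
  imports Main "HOL-Algebra.Group"
begin

definition transitive_fun :: "('g,'b) monoid_scheme \<Rightarrow> ('x \<times> 'x) set \<Rightarrow> ('x \<Rightarrow> 'x \<Rightarrow> 'g) \<Rightarrow> bool" where
  "transitive_fun G pi u \<longleftrightarrow>
     (\<forall>x y. (x, y) \<in> pi \<longrightarrow> u x y \<in> carrier G) \<and>
     (\<forall>x y z. (x, y) \<in> pi \<longrightarrow> (y, z) \<in> pi \<longrightarrow> u x y \<otimes>\<^bsub>G\<^esub> u y z = u x z)"

definition trivial_fun :: "('g,'b) monoid_scheme \<Rightarrow> 'x set \<Rightarrow> ('x \<times> 'x) set \<Rightarrow> ('x \<Rightarrow> 'x \<Rightarrow> 'g) \<Rightarrow> bool" where
  "trivial_fun G X pi u \<longleftrightarrow>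
     (\<exists>g. (\<forall>x\<in>X. g x \<in> carrier G) \<and>
          (\<forall>x y. (x, y) \<in> pi \<longrightarrow> u x y = g x \<otimes>\<^bsub>G\<^esub> inv\<^bsub>G\<^esub> (g y)))"

definition cls :: "nat \<Rightarrow> (nat \<times> nat) set \<Rightarrow> nat \<Rightarrow> nat set" where
  "cls n rho i = {j \<in> {1..n}. (i, j) \<in> rho \<and> (j, i) \<in> rho}"

definition classesC :: "nat \<Rightarrow> (nat \<times> nat) set \<Rightarrow> nat set set" where
  "classesC n rho = image (cls n rho) {1..n}"

definition cls_le :: "nat \<Rightarrow> (nat \<times> nat) set \<Rightarrow> (nat set \<times> nat set) set" where
  "cls_le n rho = {(cls n rho i, cls n rho j) | i j. i \<in> {1..n} \<and> j \<in> {1..n} \<and> (i, j) \<in> rho}"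

definition hasse_arrows :: "('c \<times> 'c) set \<Rightarrow> ('c \<times> 'c) set" where
  "hasse_arrows L = {(a, b). (a, b) \<in> L \<and> a \<noteq> b \<and>
      \<not> (\<exists>c. (a, c) \<in> L \<and> a \<noteq> c \<and> (c, b) \<in> L \<and> c \<noteq> b)}"

definition is_path :: "('c \<times> 'c) set \<Rightarrow> ('c \<times> 'c) list \<Rightarrow> bool" where
  "is_path E as \<longleftrightarrow> as \<noteq> [] \<and> set as \<subseteq> E \<and>
     (\<forall>i. Suc i < length as \<longrightarrow> snd (as ! i) = fst (as ! Suc i))"

definition path_start :: "('c \<times> 'c) list \<Rightarrow> 'c" where
  "path_start as = fst (hd as)"

definition path_end :: "('c \<times> 'c) list \<Rightarrow> 'c" where
  "path_end as = snd (last as)"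

definition path_prod :: "('g,'b) monoid_scheme \<Rightarrow> ('c \<times> 'c \<Rightarrow> 'g) \<Rightarrow> ('c \<times> 'c) list \<Rightarrow> 'g" where
  "path_prod G v as = foldr (\<lambda>a acc. v a \<otimes>\<^bsub>G\<^esub> acc) as \<one>\<^bsub>G\<^esub>"

end

theory Submission imports Defs begin

fun chain :: "('c \<times> 'c) list \<Rightarrow> bool" where
  "chain [] = True" | "chain [a] = True" | "chain (a#b#p) = (snd a = fst b \<and> chain (b#p))"

lemma chain_iff: "chain p \<longleftrightarrow> (\<forall>i. Suc i < length p \<longrightarrow> snd (p ! i) = fst (p ! Suc i))"
proof (induction p rule: chain.induct)
  case (3 a b p)
  show ?case
  proof
    assume "chain (a # b # p)"
    then show "\<forall>i. Suc i < length (a # b # p) \<longrightarrow> snd ((a # b # p) ! i) = fst ((a # b # p) ! Suc i)"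
      using 3 by (auto simp: less_Suc_eq_0_disj nth_Cons split: nat.split)
  next
    assume h: "\<forall>i. Suc i < length (a # b # p) \<longrightarrow> snd ((a # b # p) ! i) = fst ((a # b # p) ! Suc i)"
    have "snd a = fst b" using h[rule_format, of 0] by simp
    moreover have "\<forall>i. Suc i < length (b # p) \<longrightarrow> snd ((b # p) ! i) = fst ((b # p) ! Suc i)"
      using h by (metis Suc_less_eq length_Cons nth_Cons_Suc)
    ultimately show "chain (a#b#p)" using 3 by simp
  qed
qed auto

lemma is_path_chain: "is_path E p \<longleftrightarrow> p \<noteq> [] \<and> set p \<subseteq> E \<and> chain p"
  unfolding is_path_def chain_iff by auto

lemma chain_Cons: "chain (a # q) \<longleftrightarrow> (q = [] \<or> snd a = fst (hd q)) \<and> chain q"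
  by (cases q) auto

lemma chain_append: "chain (p @ q) \<longleftrightarrow> chain p \<and> chain q \<and> (p \<noteq> [] \<longrightarrow> q \<noteq> [] \<longrightarrow> snd (last p) = fst (hd q))"
  by (induction p) (auto simp: chain_Cons)

lemma path_prod_append:
  assumes "group G" "\<forall>a\<in>set p. v a \<in> carrier G" "\<forall>a\<in>set q. v a \<in> carrier G"
  shows "path_prod G v (p @ q) = path_prod G v p \<otimes>\<^bsub>G\<^esub> path_prod G v q"
  using assms(2)
proof (induction p)
  case Nil
  have "path_prod G v q \<in> carrier G" unfolding path_prod_def using assms(3)
    by (induction q) (auto intro: monoid.m_closed group.is_monoid[OF assms(1)] monoid.one_closed)
  then show ?case using assms(1) by (simp add: path_prod_def group.is_monoid monoid.l_one)
next
  case (Cons a p)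
  have c1: "path_prod G v p \<in> carrier G" unfolding path_prod_def using Cons.prems
    by (induction p) (auto intro: monoid.m_closed group.is_monoid[OF assms(1)] monoid.one_closed)
  have c2: "path_prod G v q \<in> carrier G" unfolding path_prod_def using assms(3)
    by (induction q) (auto intro: monoid.m_closed group.is_monoid[OF assms(1)] monoid.one_closed)
  have "path_prod G v ((a # p) @ q) = v a \<otimes>\<^bsub>G\<^esub> path_prod G v (p @ q)"
    by (simp add: path_prod_def)
  also have "\<dots> = v a \<otimes>\<^bsub>G\<^esub> (path_prod G v p \<otimes>\<^bsub>G\<^esub> path_prod G v q)" using Cons by simp
  also have "\<dots> = (v a \<otimes>\<^bsub>G\<^esub> path_prod G v p) \<otimes>\<^bsub>G\<^esub> path_prod G v q"
    using c1 c2 Cons.prems assms(1) by (simp add: group.is_monoid monoid.m_assoc)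
  finally show ?case by (simp add: path_prod_def)
qed

lemma path_prod_closed:
  assumes "group G" "\<forall>a\<in>set p. v a \<in> carrier G"
  shows "path_prod G v p \<in> carrier G"
  unfolding path_prod_def using assms(2)
  by (induction p) (auto intro: monoid.m_closed group.is_monoid[OF assms(1)] monoid.one_closed)

lemma path_prod_tele:
  assumes "group G" "chain p" "p \<noteq> []"
    "\<forall>a\<in>set p. f (fst a) \<in> carrier G \<and> f (snd a) \<in> carrier G \<and> v a = f (fst a) \<otimes>\<^bsub>G\<^esub> inv\<^bsub>G\<^esub> f (snd a)"
  shows "path_prod G v p = f (path_start p) \<otimes>\<^bsub>G\<^esub> inv\<^bsub>G\<^esub> f (path_end p)"
  using assms(2-4)
proof (induction p rule: chain.induct)
  case (2 a)
  then show ?case using assms(1) by (simp add: path_prod_def path_start_def path_end_def group.is_monoid monoid.r_one group.inv_closed monoid.m_closed)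
next
  case (3 a b p)
  interpret group G by fact
  have IH: "path_prod G v (b#p) = f (fst b) \<otimes>\<^bsub>G\<^esub> inv\<^bsub>G\<^esub> f (path_end (b#p))"
    using 3 by (simp add: path_start_def)
  have e: "path_end (a#b#p) = path_end (b#p)" by (simp add: path_end_def)
  have ce: "f (path_end (b#p)) \<in> carrier G" using 3(4) by (simp add: path_end_def)
  have ca: "f (fst a) \<in> carrier G" "f (snd a) \<in> carrier G" using 3(4) by auto
  have "path_prod G v (a#b#p) = v a \<otimes>\<^bsub>G\<^esub> path_prod G v (b#p)" by (simp add: path_prod_def)
  also have "\<dots> = (f (fst a) \<otimes>\<^bsub>G\<^esub> inv\<^bsub>G\<^esub> f (snd a)) \<otimes>\<^bsub>G\<^esub> (f (snd a) \<otimes>\<^bsub>G\<^esub> inv\<^bsub>G\<^esub> f (path_end (b#p)))"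
    using IH 3 by simp
  also have "\<dots> = f (fst a) \<otimes>\<^bsub>G\<^esub> inv\<^bsub>G\<^esub> f (path_end (b#p))"
    using ca ce by (simp add: m_assoc[symmetric]) (simp add: m_assoc)
  finally show ?case by (simp add: e path_start_def)
qed auto

lemma path_in_rel:
  assumes "trans L" "chain p" "p \<noteq> []" "set p \<subseteq> L"
  shows "(path_start p, path_end p) \<in> L"
  using assms(2-4)
proof (induction p rule: chain.induct)
  case (3 a b p)
  obtain x y where a: "a = (x, y)" by (cases a)
  have h1: "(fst b, path_end (b#p)) \<in> L" using 3 by (simp add: path_start_def)
  have h2: "(x, fst b) \<in> L" using 3(2,4) a by simp
  have "(x, path_end (b#p)) \<in> L" using transD[OF assms(1) h2 h1] .
  then show ?case using a by (simp add: path_start_def path_end_def)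
qed (auto simp: path_start_def path_end_def)

lemma path_prod_trans:
  assumes "group G" "trans L" "chain p" "p \<noteq> []" "set p \<subseteq> L" "transitive_fun G L w"
  shows "path_prod G (\<lambda>a. w (fst a) (snd a)) p = w (path_start p) (path_end p)"
  using assms(3-5)
proof (induction p rule: chain.induct)
  case (2 a)
  then show ?case using assms(1,6) by (simp add: path_prod_def path_start_def path_end_def group.is_monoid monoid.r_one transitive_fun_def)
next
  case (3 a b p)
  obtain x y where a: "a = (x, y)" by (cases a)
  have h1: "(fst b, path_end (b#p)) \<in> L" using path_in_rel[OF assms(2), of "b#p"] 3(2,4) by (simp add: path_start_def)
  have h2: "(x, fst b) \<in> L" using 3(2,4) a by simp
  have tr: "w x (fst b) \<otimes>\<^bsub>G\<^esub> w (fst b) (path_end (b#p)) = w x (path_end (b#p))"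
    using assms(6) h1 h2 unfolding transitive_fun_def by blast
  have IH: "path_prod G (\<lambda>a. w (fst a) (snd a)) (b#p) = w (fst b) (path_end (b#p))"
    using 3 by (simp add: path_start_def)
  have "path_prod G (\<lambda>a. w (fst a) (snd a)) (a#b#p) = w x y \<otimes>\<^bsub>G\<^esub> path_prod G (\<lambda>a. w (fst a) (snd a)) (b#p)"
    using a by (simp add: path_prod_def)
  also have "\<dots> = w x (path_end (b#p))" using IH tr a 3(2) by simp
  finally show ?case using a by (simp add: path_start_def path_end_def)
qed auto

lemma path_concat:
  assumes "is_path E p" "is_path E q" "path_end p = path_start q"
  shows "is_path E (p @ q) \<and> path_start (p @ q) = path_start p \<and> path_end (p @ q) = path_end q"
  using assms by (auto simp: is_path_chain chain_append path_start_def path_end_def)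

lemma path_exists:
  assumes "finite C" "L \<subseteq> C \<times> C" "trans L" "antisym L" "\<forall>x\<in>C. (x,x)\<in>L"
  shows "(a,b)\<in>L \<Longrightarrow> a\<noteq>b \<Longrightarrow> \<exists>p. is_path (hasse_arrows L) p \<and> path_start p = a \<and> path_end p = b"
proof (induction "card {c. (a,c)\<in>L \<and> (c,b)\<in>L}" arbitrary: a b rule: less_induct)
  case less
  have fin: "finite {c. (a,c)\<in>L \<and> (c,b)\<in>L}" for a b
    using assms(1,2) by (rule_tac finite_subset[of _ C]) auto
  show ?case
  proof (cases "(a,b) \<in> hasse_arrows L")
    case True
    then show ?thesis by (rule_tac x="[(a,b)]" in exI) (simp add: is_path_chain path_start_def path_end_def)
  next
    case False
    then obtain c where c: "(a,c)\<in>L" "a\<noteq>c" "(c,b)\<in>L" "c\<noteq>b"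
      using less.prems unfolding hasse_arrows_def by auto
    have bC: "b \<in> C" "a \<in> C" using less.prems assms(2) by auto
    have s1: "{d. (a,d)\<in>L \<and> (d,c)\<in>L} \<subset> {d. (a,d)\<in>L \<and> (d,b)\<in>L}"
    proof
      show "{d. (a,d)\<in>L \<and> (d,c)\<in>L} \<subseteq> {d. (a,d)\<in>L \<and> (d,b)\<in>L}"
        using c(3) assms(3) by (auto dest: transD)
      have "b \<notin> {d. (a,d)\<in>L \<and> (d,c)\<in>L}" using c(3,4) assms(4) by (auto dest: antisymD)
      moreover have "b \<in> {d. (a,d)\<in>L \<and> (d,b)\<in>L}" using less.prems bC assms(5) by auto
      ultimately show "{d. (a,d)\<in>L \<and> (d,c)\<in>L} \<noteq> {d. (a,d)\<in>L \<and> (d,b)\<in>L}" by blast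
    qed
    have s2: "{d. (c,d)\<in>L \<and> (d,b)\<in>L} \<subset> {d. (a,d)\<in>L \<and> (d,b)\<in>L}"
    proof
      show "{d. (c,d)\<in>L \<and> (d,b)\<in>L} \<subseteq> {d. (a,d)\<in>L \<and> (d,b)\<in>L}"
        using c(1) assms(3) by (auto dest: transD)
      have "a \<notin> {d. (c,d)\<in>L \<and> (d,b)\<in>L}" using c(1,2) assms(4) by (auto dest: antisymD)
      moreover have "a \<in> {d. (a,d)\<in>L \<and> (d,b)\<in>L}" using less.prems bC assms(5) by auto
      ultimately show "{d. (c,d)\<in>L \<and> (d,b)\<in>L} \<noteq> {d. (a,d)\<in>L \<and> (d,b)\<in>L}" by blast
    qed
    obtain p1 where p1: "is_path (hasse_arrows L) p1" "path_start p1 = a" "path_end p1 = c"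
      using less.hyps[OF psubset_card_mono[OF fin s1] c(1,2)] by blast
    obtain p2 where p2: "is_path (hasse_arrows L) p2" "path_start p2 = c" "path_end p2 = b"
      using less.hyps[OF psubset_card_mono[OF fin s2] c(3,4)] by blast
    show ?thesis using path_concat[OF p1(1) p2(1)] p1 p2 by auto
  qed
qed

lemma hasse_sub: "hasse_arrows L \<subseteq> L" unfolding hasse_arrows_def by auto

lemma tf_refl_one:
  assumes "group G" "transitive_fun G L w" "(x,x) \<in> L"
  shows "w x x = \<one>\<^bsub>G\<^esub>"
proof -
  have c: "w x x \<in> carrier G" using assms(2,3) unfolding transitive_fun_def by blast
  have "w x x \<otimes>\<^bsub>G\<^esub> w x x = w x x" using assms(2,3) unfolding transitive_fun_def by blast
  then show ?thesis using group.r_cancel_one[OF assms(1) c c] by simp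
qed

lemma partB:
  assumes G: "group G" and fC: "finite C" and LC: "L \<subseteq> C \<times> C" and tr: "trans L"
    and an: "antisym L" and rf: "\<forall>x\<in>C. (x,x)\<in>L"
  shows "(\<forall>w. transitive_fun G L w \<longrightarrow> trivial_fun G C L w)
          \<longleftrightarrow> (\<forall>v. (\<forall>a \<in> hasse_arrows L. v a \<in> carrier G) \<and>
                     (\<forall>p q. is_path (hasse_arrows L) p
                          \<longrightarrow> is_path (hasse_arrows L) q
                          \<longrightarrow> path_start p = path_start q \<longrightarrow> path_end p = path_end q
                          \<longrightarrow> path_prod G v p = path_prod G v q)
                   \<longrightarrow> (\<exists>f. (\<forall>\<alpha> \<in> C. f \<alpha> \<in> carrier G) \<and>
                            (\<forall>a \<in> hasse_arrows L.
                               v a = f (fst a) \<otimes>\<^bsub>G\<^esub> inv\<^bsub>G\<^esub> (f (snd a)))))"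
  (is "?A \<longleftrightarrow> ?B")
proof
  assume A: ?A
  show ?B
  proof (intro allI impI, elim conjE)
    fix v
    assume vc: "\<forall>a \<in> hasse_arrows L. v a \<in> carrier G"
      and vi: "\<forall>p q. is_path (hasse_arrows L) p \<longrightarrow> is_path (hasse_arrows L) q
                \<longrightarrow> path_start p = path_start q \<longrightarrow> path_end p = path_end q
                \<longrightarrow> path_prod G v p = path_prod G v q"
    define P where "P x y = (SOME p. is_path (hasse_arrows L) p \<and> path_start p = x \<and> path_end p = y)" for x y
    have P: "is_path (hasse_arrows L) (P x y) \<and> path_start (P x y) = x \<and> path_end (P x y) = y"
      if "(x,y)\<in>L" "x\<noteq>y" for x y
      unfolding P_def by (rule someI_ex, rule path_exists[OF fC LC tr an rf that])
    define w where "w x y = (if x = y then \<one>\<^bsub>G\<^esub> else path_prod G v (P x y))" for x y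
    have pc: "path_prod G v p \<in> carrier G" if "is_path (hasse_arrows L) p" for p
      using path_prod_closed[OF G, of p v] vc that unfolding is_path_def by blast
    have wc: "w x y \<in> carrier G" if "(x,y)\<in>L" for x y
      using P[OF that] pc G unfolding w_def by (auto intro: monoid.one_closed group.is_monoid)
    have "transitive_fun G L w"
      unfolding transitive_fun_def
    proof (intro conjI allI impI)
      fix x y assume "(x,y)\<in>L" then show "w x y \<in> carrier G" by (rule wc)
    next
      fix x y z assume xy: "(x,y)\<in>L" and yz: "(y,z)\<in>L"
      show "w x y \<otimes>\<^bsub>G\<^esub> w y z = w x z"
      proof (cases "x = y")
        case True
        then show ?thesis using wc[OF yz] G by (simp add: w_def group.is_monoid monoid.l_one)
      next
        case xny: False
        show ?thesis
        proof (cases "y = z")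
          case True
          then show ?thesis using wc[OF xy] G by (simp add: w_def group.is_monoid monoid.r_one)
        next
          case ynz: False
          have xz: "(x,z)\<in>L" using xy yz tr by (rule_tac transD)
          have xnz: "x \<noteq> z" using xy yz an xny by (auto dest: antisymD)
          have p1: "is_path (hasse_arrows L) (P x y)" "path_start (P x y) = x" "path_end (P x y) = y"
            using P[OF xy xny] by auto
          have p2: "is_path (hasse_arrows L) (P y z)" "path_start (P y z) = y" "path_end (P y z) = z"
            using P[OF yz ynz] by auto
          have p3: "is_path (hasse_arrows L) (P x z)" "path_start (P x z) = x" "path_end (P x z) = z"
            using P[OF xz xnz] by auto
          have cc: "is_path (hasse_arrows L) (P x y @ P y z) \<and> path_start (P x y @ P y z) = x
               \<and> path_end (P x y @ P y z) = z"
            using path_concat[OF p1(1) p2(1)] p1 p2 by simp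
          have "w x y \<otimes>\<^bsub>G\<^esub> w y z = path_prod G v (P x y @ P y z)"
          proof -
            have "\<forall>a\<in>set (P x y). v a \<in> carrier G" "\<forall>a\<in>set (P y z). v a \<in> carrier G"
              using p1(1) p2(1) vc unfolding is_path_def by blast+
            then show ?thesis using path_prod_append[OF G, of "P x y" v "P y z"] xny ynz
              unfolding w_def by simp
          qed
          also have "\<dots> = path_prod G v (P x z)" using vi cc p3 by metis
          finally show ?thesis using xnz by (simp add: w_def)
        qed
      qed
    qed
    with A obtain g where g: "\<forall>x\<in>C. g x \<in> carrier G"
      "\<forall>x y. (x, y) \<in> L \<longrightarrow> w x y = g x \<otimes>\<^bsub>G\<^esub> inv\<^bsub>G\<^esub> (g y)"
      unfolding trivial_fun_def by blast
    show "\<exists>f. (\<forall>\<alpha> \<in> C. f \<alpha> \<in> carrier G) \<and>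
             (\<forall>a \<in> hasse_arrows L. v a = f (fst a) \<otimes>\<^bsub>G\<^esub> inv\<^bsub>G\<^esub> (f (snd a)))"
    proof (intro exI conjI ballI)
      fix \<alpha> assume "\<alpha> \<in> C" then show "g \<alpha> \<in> carrier G" using g by blast
    next
      fix a assume a: "a \<in> hasse_arrows L"
      have aL: "(fst a, snd a) \<in> L" and ne: "fst a \<noteq> snd a" using a unfolding hasse_arrows_def by auto
      have single: "is_path (hasse_arrows L) [a]" using a by (simp add: is_path_chain)
      have "w (fst a) (snd a) = path_prod G v (P (fst a) (snd a))" using ne by (simp add: w_def)
      also have "\<dots> = path_prod G v [a]"
        using vi P[OF aL ne] single by (metis path_end_def path_start_def last_ConsL list.sel(1))
      also have "\<dots> = v a" using vc a G by (simp add: path_prod_def group.is_monoid monoid.r_one)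
      finally show "v a = g (fst a) \<otimes>\<^bsub>G\<^esub> inv\<^bsub>G\<^esub> (g (snd a))" using g(2) aL by simp
    qed
  qed
next
  assume B: ?B
  show ?A
  proof (intro allI impI)
    fix w assume tw: "transitive_fun G L w"
    define v where "v a = w (fst a) (snd a)" for a
    have vc: "\<forall>a \<in> hasse_arrows L. v a \<in> carrier G"
      using tw hasse_sub unfolding transitive_fun_def v_def by fastforce
    have pp: "path_prod G v p = w (path_start p) (path_end p)" if "is_path (hasse_arrows L) p" for p
      unfolding v_def using path_prod_trans[OF G tr, of p w] that hasse_sub tw
      unfolding is_path_chain by blast
    have "\<forall>p q. is_path (hasse_arrows L) p \<longrightarrow> is_path (hasse_arrows L) q
                \<longrightarrow> path_start p = path_start q \<longrightarrow> path_end p = path_end q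
                \<longrightarrow> path_prod G v p = path_prod G v q"
      using pp by simp
    with B vc obtain f where f: "\<forall>\<alpha> \<in> C. f \<alpha> \<in> carrier G"
      "\<forall>a \<in> hasse_arrows L. v a = f (fst a) \<otimes>\<^bsub>G\<^esub> inv\<^bsub>G\<^esub> (f (snd a))" by blast
    show "trivial_fun G C L w"
      unfolding trivial_fun_def
    proof (intro exI conjI allI impI)
      show "\<forall>x\<in>C. f x \<in> carrier G" by (rule f(1))
    next
      fix x y assume xy: "(x,y) \<in> L"
      have xC: "x \<in> C" "y \<in> C" using xy LC by auto
      show "w x y = f x \<otimes>\<^bsub>G\<^esub> inv\<^bsub>G\<^esub> f y"
      proof (cases "x = y")
        case True
        then show ?thesis using tf_refl_one[OF G tw] xy f(1) xC G by (simp add: group.r_inv)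
      next
        case False
        obtain p where p: "is_path (hasse_arrows L) p" "path_start p = x" "path_end p = y"
          using path_exists[OF fC LC tr an rf xy False] by blast
        have "w x y = path_prod G v p" using pp[OF p(1)] p by simp
        also have "\<dots> = f x \<otimes>\<^bsub>G\<^esub> inv\<^bsub>G\<^esub> f y"
        proof -
          have "\<forall>a\<in>set p. f (fst a) \<in> carrier G \<and> f (snd a) \<in> carrier G \<and> v a = f (fst a) \<otimes>\<^bsub>G\<^esub> inv\<^bsub>G\<^esub> f (snd a)"
          proof
            fix a assume "a \<in> set p"
            then have "a \<in> hasse_arrows L" using p(1) unfolding is_path_def by blast
            moreover then have "fst a \<in> C" "snd a \<in> C" using hasse_sub[of L] LC by (metis mem_Sigma_iff prod.collapse subsetD)+
            ultimately show "f (fst a) \<in> carrier G \<and> f (snd a) \<in> carrier G \<and> v a = f (fst a) \<otimes>\<^bsub>G\<^esub> inv\<^bsub>G\<^esub> f (snd a)"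
              using f by blast
          qed
          then show ?thesis using path_prod_tele[OF G, of p f v] p unfolding is_path_chain by blast
        qed
        finally show ?thesis .
      qed
    qed
  qed
qed

lemma po_unf: "preorder_on A r \<longleftrightarrow> r \<subseteq> A \<times> A \<and> (\<forall>x\<in>A. (x,x)\<in>r) \<and> trans r"
  by (simp add: preorder_on_def refl_on_def)

lemma cls_eq:
  assumes "preorder_on {1..n} rho" "i \<in> {1..n}" "j \<in> {1..n}"
  shows "cls n rho i = cls n rho j \<longleftrightarrow> (i,j)\<in>rho \<and> (j,i)\<in>rho"
proof
  assume e: "cls n rho i = cls n rho j"
  have "i \<in> cls n rho i" using assms unfolding po_unf cls_def by auto
  then show "(i,j)\<in>rho \<and> (j,i)\<in>rho" using e unfolding cls_def by auto
next
  assume h: "(i,j)\<in>rho \<and> (j,i)\<in>rho"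
  have t: "trans rho" using assms(1) unfolding po_unf by blast
  show "cls n rho i = cls n rho j" unfolding cls_def using h t by (auto dest: transD)
qed

lemma cls_le_iff:
  assumes "preorder_on {1..n} rho" "i \<in> {1..n}" "j \<in> {1..n}"
  shows "(cls n rho i, cls n rho j) \<in> cls_le n rho \<longleftrightarrow> (i,j)\<in>rho"
proof
  assume "(cls n rho i, cls n rho j) \<in> cls_le n rho"
  then obtain i' j' where h: "cls n rho i = cls n rho i'" "cls n rho j = cls n rho j'"
    "i' \<in> {1..n}" "j' \<in> {1..n}" "(i',j')\<in>rho" unfolding cls_le_def by auto
  have t: "trans rho" using assms(1) unfolding po_unf by blast
  have "(i,i')\<in>rho" "(j',j)\<in>rho" using h cls_eq[OF assms(1)] assms by auto
  then show "(i,j)\<in>rho" using h(5) t by (meson transD)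
next
  assume "(i,j)\<in>rho" then show "(cls n rho i, cls n rho j) \<in> cls_le n rho"
    unfolding cls_le_def using assms by auto
qed

lemma cls_le_po:
  assumes "preorder_on {1..n} rho"
  shows "finite (classesC n rho)" "cls_le n rho \<subseteq> classesC n rho \<times> classesC n rho"
    "trans (cls_le n rho)" "antisym (cls_le n rho)" "\<forall>x\<in>classesC n rho. (x,x)\<in>cls_le n rho"
proof -
  show "finite (classesC n rho)" unfolding classesC_def by simp
  show "cls_le n rho \<subseteq> classesC n rho \<times> classesC n rho"
    unfolding cls_le_def classesC_def by auto
  have t: "trans rho" using assms(1) unfolding po_unf by blast
  show "trans (cls_le n rho)"
  proof (rule transI)
    fix x y z assume "(x,y) \<in> cls_le n rho" "(y,z) \<in> cls_le n rho"
    then obtain i j j' k where h: "x = cls n rho i" "y = cls n rho j" "y = cls n rho j'" "z = cls n rho k"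
      "i \<in> {1..n}" "j \<in> {1..n}" "j' \<in> {1..n}" "k \<in> {1..n}" "(i,j)\<in>rho" "(j',k)\<in>rho"
      unfolding cls_le_def by blast
    have "(j,j')\<in>rho" using cls_eq[OF assms h(6,7)] h by simp
    then have "(i,k)\<in>rho" using h t by (meson transD)
    then show "(x,z) \<in> cls_le n rho" using h unfolding cls_le_def by blast
  qed
  show "antisym (cls_le n rho)"
  proof (rule antisymI)
    fix x y assume a: "(x,y) \<in> cls_le n rho" "(y,x) \<in> cls_le n rho"
    then obtain i j where h: "x = cls n rho i" "y = cls n rho j" "i \<in> {1..n}" "j \<in> {1..n}"
      unfolding cls_le_def by blast
    have "(i,j)\<in>rho" "(j,i)\<in>rho" using a h cls_le_iff[OF assms] by auto
    then show "x = y" using h cls_eq[OF assms h(3,4)] by simp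
  qed
  show "\<forall>x\<in>classesC n rho. (x,x)\<in>cls_le n rho"
    using assms unfolding classesC_def cls_le_def po_unf by blast
qed

lemma partA:
  fixes G (structure)
  assumes G: "group G" and P: "preorder_on {1..n} rho"
  shows "(\<forall>u. transitive_fun G rho u \<longrightarrow> trivial_fun G {1..n} rho u)
          \<longleftrightarrow> (\<forall>w. transitive_fun G (cls_le n rho) w
                     \<longrightarrow> trivial_fun G (classesC n rho) (cls_le n rho) w)"
  (is "?A \<longleftrightarrow> ?B")
proof -
  interpret group G by (rule G)
  define r where "r \<alpha> = (SOME i. i \<in> {1..n} \<and> \<alpha> = cls n rho i)" for \<alpha>
  have r: "r \<alpha> \<in> {1..n} \<and> \<alpha> = cls n rho (r \<alpha>)" if "\<alpha> \<in> classesC n rho" for \<alpha>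
    unfolding r_def by (rule someI_ex) (use that in \<open>auto simp: classesC_def\<close>)
  have rsub: "rho \<subseteq> {1..n} \<times> {1..n}" and rrf: "\<forall>x\<in>{1..n}. (x,x)\<in>rho" and t: "trans rho"
    using P unfolding po_unf by auto
  have clsC: "cls n rho i \<in> classesC n rho" if "i \<in> {1..n}" for i
    using that unfolding classesC_def by blast
  have rcls: "(r (cls n rho i), i) \<in> rho \<and> (i, r (cls n rho i)) \<in> rho \<and> r (cls n rho i) \<in> {1..n}"
    if "i \<in> {1..n}" for i
    using r[OF clsC[OF that]] cls_eq[OF P _ that] by metis
  show ?thesis
  proof
    assume A: ?A
    show ?B
    proof (intro allI impI)
      fix w assume tw: "transitive_fun G (cls_le n rho) w"
      define u where "u i j = w (cls n rho i) (cls n rho j)" for i j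
      have "transitive_fun G rho u"
        unfolding transitive_fun_def u_def
      proof (intro conjI allI impI)
        fix x y assume "(x,y)\<in>rho"
        then have "(cls n rho x, cls n rho y) \<in> cls_le n rho" using rsub cls_le_iff[OF P] by auto
        then show "w (cls n rho x) (cls n rho y) \<in> carrier G" using tw unfolding transitive_fun_def by blast
      next
        fix x y z assume "(x,y)\<in>rho" "(y,z)\<in>rho"
        then have "(cls n rho x, cls n rho y) \<in> cls_le n rho" "(cls n rho y, cls n rho z) \<in> cls_le n rho"
          using rsub cls_le_iff[OF P] by auto
        then show "w (cls n rho x) (cls n rho y) \<otimes> w (cls n rho y) (cls n rho z) = w (cls n rho x) (cls n rho z)"
          using tw unfolding transitive_fun_def by blast
      qed
      with A obtain g where g: "\<forall>x\<in>{1..n}. g x \<in> carrier G"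
        "\<forall>x y. (x, y) \<in> rho \<longrightarrow> u x y = g x \<otimes> inv (g y)"
        unfolding trivial_fun_def by blast
      show "trivial_fun G (classesC n rho) (cls_le n rho) w"
        unfolding trivial_fun_def
      proof (intro exI conjI allI impI ballI)
        fix \<alpha> assume "\<alpha> \<in> classesC n rho" then show "g (r \<alpha>) \<in> carrier G" using r g(1) by blast
      next
        fix \<alpha> \<beta> assume ab: "(\<alpha>, \<beta>) \<in> cls_le n rho"
        then have C: "\<alpha> \<in> classesC n rho" "\<beta> \<in> classesC n rho" using cls_le_po(2)[OF P] by auto
        have "(r \<alpha>, r \<beta>) \<in> rho" using r[OF C(1)] r[OF C(2)] ab cls_le_iff[OF P] by metis
        then have "u (r \<alpha>) (r \<beta>) = g (r \<alpha>) \<otimes> inv (g (r \<beta>))" using g(2) by blast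
        then show "w \<alpha> \<beta> = g (r \<alpha>) \<otimes> inv (g (r \<beta>))" using r[OF C(1)] r[OF C(2)] unfolding u_def by metis
      qed
    qed
  next
    assume B: ?B
    show ?A
    proof (intro allI impI)
      fix u assume tu: "transitive_fun G rho u"
      have uc: "u x y \<in> carrier G" if "(x,y)\<in>rho" for x y using tu that unfolding transitive_fun_def by blast
      have ut: "u x y \<otimes> u y z = u x z" if "(x,y)\<in>rho" "(y,z)\<in>rho" for x y z
        using tu that unfolding transitive_fun_def by blast
      define w where "w \<alpha> \<beta> = u (r \<alpha>) (r \<beta>)" for \<alpha> \<beta>
      have wrel: "(r \<alpha>, r \<beta>) \<in> rho" if ab: "(\<alpha>, \<beta>) \<in> cls_le n rho" for \<alpha> \<beta>
      proof -
        have C: "\<alpha> \<in> classesC n rho" "\<beta> \<in> classesC n rho" using cls_le_po(2)[OF P] ab by auto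
        show ?thesis using r[OF C(1)] r[OF C(2)] ab cls_le_iff[OF P] by metis
      qed
      have "transitive_fun G (cls_le n rho) w"
        unfolding transitive_fun_def w_def using wrel uc ut by blast
      with B obtain h where h: "\<forall>x\<in>classesC n rho. h x \<in> carrier G"
        "\<forall>x y. (x, y) \<in> cls_le n rho \<longrightarrow> w x y = h x \<otimes> inv (h y)"
        unfolding trivial_fun_def by blast
      define g where "g i = u i (r (cls n rho i)) \<otimes> h (cls n rho i)" for i
      show "trivial_fun G {1..n} rho u"
        unfolding trivial_fun_def
      proof (intro exI conjI allI impI ballI)
        fix i assume i: "i \<in> {1..n}"
        show "g i \<in> carrier G" unfolding g_def using rcls[OF i] uc h(1) clsC[OF i] by blast
      next
        fix i j assume ij: "(i,j)\<in>rho"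
        have i: "i \<in> {1..n}" and j: "j \<in> {1..n}" using ij rsub by auto
        define ri where "ri = r (cls n rho i)"
        define rj where "rj = r (cls n rho j)"
        have iri: "(i,ri)\<in>rho" "(ri,i)\<in>rho" and jrj: "(j,rj)\<in>rho" "(rj,j)\<in>rho"
          using rcls[OF i] rcls[OF j] ri_def rj_def by auto
        have rr: "(ri, rj) \<in> rho" using iri(2) ij jrj(1) t by (meson transD)
        have hc: "h (cls n rho i) \<in> carrier G" "h (cls n rho j) \<in> carrier G" using h(1) clsC i j by auto
        have hw: "h (cls n rho i) \<otimes> inv h (cls n rho j) = u ri rj"
          using h(2) cls_le_iff[OF P i j] ij unfolding w_def ri_def rj_def by simp
        have ujj: "u j j = \<one>" using tf_refl_one[OF G tu] rrf j by blast
        have inv_u: "inv (u j rj) = u rj j"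
          using inv_equality[of "u rj j" "u j rj"] ut[OF jrj(2) jrj(1)] uc jrj
          using tf_refl_one[OF G tu] rsub jrj(1) rrf by (metis mem_Sigma_iff subsetD)
        have "g i \<otimes> inv g j = u i ri \<otimes> h (cls n rho i) \<otimes> (inv h (cls n rho j) \<otimes> inv u j rj)"
          unfolding g_def ri_def[symmetric] rj_def[symmetric]
          using uc iri jrj hc by (simp add: inv_mult_group m_assoc)
        also have "\<dots> = u i ri \<otimes> (h (cls n rho i) \<otimes> inv h (cls n rho j)) \<otimes> inv u j rj"
          using uc iri jrj hc by (simp add: m_assoc)
        also have "\<dots> = u i ri \<otimes> u ri rj \<otimes> u rj j" using hw inv_u by simp
        also have "\<dots> = u i j"
        proof -
          have irj: "(i, rj) \<in> rho" using iri(1) rr t by (meson transD)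
          show ?thesis using ut[OF iri(1) rr] ut[OF irj jrj(2)] by simp
        qed
        finally show "u i j = g i \<otimes> inv g j" by simp
      qed
    qed
  qed
qed

theorem proposition5p4:
  fixes G :: "('g, 'b) monoid_scheme"
    and n :: nat and rho :: "(nat \<times> nat) set"
  assumes "group G"
    and "preorder_on {1..n} rho"
  shows "((\<forall>u. transitive_fun G rho u \<longrightarrow> trivial_fun G {1..n} rho u)
          \<longleftrightarrow> (\<forall>w. transitive_fun G (cls_le n rho) w
                     \<longrightarrow> trivial_fun G (classesC n rho) (cls_le n rho) w))
       \<and> ((\<forall>w. transitive_fun G (cls_le n rho) w
                     \<longrightarrow> trivial_fun G (classesC n rho) (cls_le n rho) w)
          \<longleftrightarrow> (\<forall>v. (\<forall>a \<in> hasse_arrows (cls_le n rho). v a \<in> carrier G) \<and>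
                     (\<forall>p q. is_path (hasse_arrows (cls_le n rho)) p
                          \<longrightarrow> is_path (hasse_arrows (cls_le n rho)) q
                          \<longrightarrow> path_start p = path_start q \<longrightarrow> path_end p = path_end q
                          \<longrightarrow> path_prod G v p = path_prod G v q)
                   \<longrightarrow> (\<exists>f. (\<forall>\<alpha> \<in> classesC n rho. f \<alpha> \<in> carrier G) \<and>
                            (\<forall>a \<in> hasse_arrows (cls_le n rho).
                               v a = f (fst a) \<otimes>\<^bsub>G\<^esub> inv\<^bsub>G\<^esub> (f (snd a))))))"
  using partA[OF assms] partB[OF assms(1) cls_le_po[OF assms(2)]] by blast

end
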